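(* Under the standing assumptions, if $a<1/4$ then $\lim_{\theta\to\pi^-}g_m(\theta)$ has sign $(-1)^m$.
   Context: Standing assumptions: $a,b\in\mathbb{R}$ with $b>0$, $1+a+b>0$, $9-27a+b>0$, $2-8a+8a^2+ab\ne0$, $b+1-a\ne0$. Let $f^*(\zeta,\theta)=(\zeta+2\cos\theta)(2\zeta\cos\theta+1)+b\zeta-a(\zeta+2\cos\theta)^3$. Under these assumptions, for each $\theta\in(\pi/2,\pi)$ the polynomial $f^*(\cdot,\theta)$ has exactly one real zero in $(-1,1)$; denote it $w(\theta)$ and set $\zeta(\theta)=1/w(\theta)$. Define $$g_m(\theta)=\frac{(\zeta(\theta)-\cos\theta)\sin((m+1)\theta)}{\sin\theta}-\cos((m+1)\theta)+\frac{1}{\zeta(\theta)^{m+1}}.$$ *)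

theory Defs
  imports Complex_Main
begin

definition fstar :: "real \<Rightarrow> real \<Rightarrow> real \<Rightarrow> real \<Rightarrow> real" where
  "fstar a b z \<theta> = (z + 2 * cos \<theta>) * (2 * z * cos \<theta> + 1) + b * z - a * (z + 2 * cos \<theta>) ^ 3"

text \<open>The unique real zero of fstar in (-1,1) (exists and is unique under the standing assumptions).\<close>
definition wz :: "real \<Rightarrow> real \<Rightarrow> real \<Rightarrow> real" where
  "wz a b \<theta> = (THE z. -1 < z \<and> z < 1 \<and> fstar a b z \<theta> = 0)"

definition zeta :: "real \<Rightarrow> real \<Rightarrow> real \<Rightarrow> real" where
  "zeta a b \<theta> = 1 / wz a b \<theta>"

definition gm :: "real \<Rightarrow> real \<Rightarrow> nat \<Rightarrow> real \<Rightarrow> real" where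
  "gm a b m \<theta> = (zeta a b \<theta> - cos \<theta>) * sin ((real m + 1) * \<theta>) / sin \<theta>
      - cos ((real m + 1) * \<theta>) + 1 / zeta a b \<theta> ^ (m + 1)"

end

theory Submission imports Defs begin

definition F :: "real \<Rightarrow> real \<Rightarrow> real \<Rightarrow> real \<Rightarrow> real" where
  "F a b z c = (z + 2 * c) * (2 * z * c + 1) + b * z - a * (z + 2 * c) ^ 3"

lemma fstar_F: "fstar a b z t = F a b z (cos t)"
  by (simp add: fstar_def F_def)

lemma F_deriv: "((\<lambda>z. F a b z c) has_real_derivative
   (4*z*c + 1 + 4*c^2 + b - 3*a*(z + 2*c)^2)) (at z)"
  unfolding F_def
  by (rule derivative_eq_intros refl | simp)+ (simp add: power2_eq_square algebra_simps)

lemma D_base: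
  fixes a b z :: real
  assumes "a < 1/4" "b > 0" "-1 \<le> z" "z \<le> 1"
  shows "-4*z + 5 + b - 3*a*(z-2)^2 \<ge> 1/4"
proof (cases "a \<le> 0")
  case True
  have "a*(z-2)^2 \<le> 0" using True by (simp add: mult_nonpos_nonneg)
  then show ?thesis using assms by linarith
next
  case False
  have h1: "3*a*(z-2)^2 \<le> 3/4*(z-2)^2" using False assms(1)
    by (intro mult_right_mono) auto
  have h2: "(1 - z) * (3*z + 7) \<ge> 0" using assms by (intro mult_nonneg_nonneg) auto
  have h3: "3*(z-2)^2 \<le> 19 - 16*z" using h2 by (simp add: power2_eq_square algebra_simps)
  show ?thesis using h1 h3 assms by linarith
qed

lemma R_bound:
  fixes a c z :: real
  assumes "-1 \<le> z" "z \<le> 1" "-1 \<le> c" "c \<le> 0"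
  shows "\<bar>4*z + 4*(c-1) - 6*a*(2*z+2*c-2)\<bar> \<le> 12 + 36*\<bar>a\<bar>"
proof -
  have "\<bar>6*a*(2*z+2*c-2)\<bar> = 6*\<bar>a\<bar>*\<bar>2*z+2*c-2\<bar>" by (simp add: abs_mult)
  also have "\<dots> \<le> 6*\<bar>a\<bar>*6" using assms by (intro mult_left_mono) auto
  finally have h: "\<bar>6*a*(2*z+2*c-2)\<bar> \<le> 36*\<bar>a\<bar>" by simp
  have h2: "\<bar>4*z + 4*(c-1)\<bar> \<le> 12" using assms by (simp add: abs_le_iff)
  have "\<bar>4*z + 4*(c-1) - 6*a*(2*z+2*c-2)\<bar> \<le> \<bar>4*z + 4*(c-1)\<bar> + \<bar>6*a*(2*z+2*c-2)\<bar>"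
    by (rule abs_triangle_ineq4)
  also have "\<dots> \<le> 12 + 36*\<bar>a\<bar>" using h2 h by (rule add_mono)
  finally show ?thesis .
qed

definition dl :: "real \<Rightarrow> real" where "dl a = 1 / (4*(12 + 36*\<bar>a\<bar>))"

lemma dl_pos: "dl a > 0" unfolding dl_def by (simp add: add_pos_nonneg)

lemma aux_pos: "x \<ge> 1/4 \<Longrightarrow> - y < 1/4 \<Longrightarrow> 0 < x + (y::real)" by linarith

lemma abs_aux: fixes a c X:: real assumes "\<bar>X\<bar> \<le> 12 + 36*\<bar>a\<bar>" "-1 \<le> c"
  shows "\<bar>(c+1)*X\<bar> \<le> (c+1)*(12 + 36*\<bar>a\<bar>)"
  using assms by (simp add: abs_mult mult_left_mono)

lemma dl_mult: "dl a * (12 + 36*\<bar>a\<bar>) = 1/4"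
proof -
  have K: "12 + 36*\<bar>a\<bar> > 0" by (simp add: add_pos_nonneg)
  show ?thesis using K unfolding dl_def by simp
qed

lemma D_pos:
  fixes a b z c :: real
  assumes "a < 1/4" "b > 0" "-1 \<le> z" "z \<le> 1" "-1 \<le> c" "c \<le> 0" "c + 1 < dl a"
  shows "4*z*c + 1 + 4*c^2 + b - 3*a*(z + 2*c)^2 > 0"
proof -
  define X where "X = 4*z + 4*(c-1) - 6*a*(2*z+2*c-2)"
  define B where "B = -4*z + 5 + b - 3*a*(z-2)^2"
  have eq: "4*z*c + 1 + 4*c^2 + b - 3*a*(z + 2*c)^2 = B + (c+1)*X"
    unfolding X_def B_def by (simp add: power2_eq_square algebra_simps)
  have K: "12 + 36*\<bar>a\<bar> > 0" by (simp add: add_pos_nonneg)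
  have XB: "\<bar>X\<bar> \<le> 12 + 36*\<bar>a\<bar>" unfolding X_def by (rule R_bound[OF assms(3-6)])
  have "- ((c+1)*X) \<le> \<bar>(c+1)*X\<bar>" by (rule abs_ge_minus_self)
  also have "\<dots> \<le> (c+1)*(12 + 36*\<bar>a\<bar>)" by (rule abs_aux[OF XB assms(5)])
  also have "\<dots> < dl a * (12 + 36*\<bar>a\<bar>)" using assms(7) K by (intro mult_strict_right_mono) auto
  also have "\<dots> = 1/4" by (rule dl_mult)
  finally have "- ((c+1)*X) < 1/4" .
  moreover have "B \<ge> 1/4" unfolding B_def by (rule D_base[OF assms(1-4)])
  ultimately show ?thesis unfolding eq by (intro aux_pos)
qed

lemma F_mono:
  assumes "a < 1/4" "b > 0" "-1 \<le> c" "c \<le> 0" "c + 1 < dl a"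
    "-1 \<le> z1" "z1 < z2" "z2 \<le> 1"
  shows "F a b z1 c < F a b z2 c"
  using assms(7)
proof (rule DERIV_pos_imp_increasing)
  fix x assume "z1 \<le> x" "x \<le> z2"
  then show "\<exists>y. ((\<lambda>z. F a b z c) has_real_derivative y) (at x) \<and> y > 0"
  proof (intro exI conjI)
    show "((\<lambda>z. F a b z c) has_real_derivative (4*x*c + 1 + 4*c^2 + b - 3*a*(x + 2*c)^2)) (at x)"
      by (rule F_deriv)
    have "-1 \<le> x" "x \<le> 1" using \<open>z1 \<le> x\<close> \<open>x \<le> z2\<close> assms by linarith+
    then show "4*x*c + 1 + 4*c^2 + b - 3*a*(x + 2*c)^2 > 0"
      using assms by (intro D_pos) auto
  qed
qed

fun P :: "nat \<Rightarrow> real \<Rightarrow> real" where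
  "P 0 t = 1"
| "P (Suc 0) t = 2 * cos t"
| "P (Suc (Suc n)) t = 2 * cos t * P (Suc n) t - P n t"

lemma P_sin: "sin ((real n + 1) * t) = sin t * P n t"
proof (induction n t rule: P.induct)
  case (1 t) show ?case by (simp only: P.simps of_nat_0 add_0_left mult_1 mult_1_right)
next
  case (2 t)
  have e: "(real (Suc 0) + 1) * t = 2 * t" by simp
  show ?case unfolding e sin_double by simp
next
  case (3 n t)
  have A: "sin ((real (Suc n) + 1) * t) = sin t * P (Suc n) t"
   and B: "sin ((real n + 1) * t) = sin t * P n t" using 3 by simp_all
  define x where "x = (real n + 2) * t"
  have e1: "(real (Suc (Suc n)) + 1) * t = x + t" and e2: "(real (Suc n) + 1) * t = x"
    and e3: "(real n + 1) * t = x - t" unfolding x_def by (simp_all add: algebra_simps)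
  have "sin ((real (Suc (Suc n)) + 1) * t) = 2 * cos t * sin ((real (Suc n) + 1) * t) - sin ((real n + 1) * t)"
    unfolding e1 e2 e3 by (simp add: sin_add sin_diff)
  also have "\<dots> = sin t * (2 * cos t * P (Suc n) t - P n t)" unfolding A B by (simp add: algebra_simps)
  finally show ?case by simp
qed

lemma P_cont2: "isCont (P n) t \<and> isCont (P (Suc n)) t"
proof (induction n)
  case 0
  have "P 0 = (\<lambda>t. 1)" "P (Suc 0) = (\<lambda>t. 2*cos t)" by (rule ext, simp)+
  then show ?case by simp
next
  case (Suc n)
  have e: "P (Suc (Suc n)) = (\<lambda>t. 2*cos t*P (Suc n) t - P n t)" by (rule ext) simp
  have "isCont (\<lambda>t. 2*cos t*P (Suc n) t - P n t) t"
    using Suc.IH by (intro continuous_intros) auto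
  then show ?case using Suc.IH e by simp
qed

lemma P_cont: "isCont (P n) t" using P_cont2 by blast

lemma pi_step: fixes p q :: real shows "p = - ((-1)^n) * (real n + 2) \<Longrightarrow> q = (-1)^n * (real n + 1) \<Longrightarrow>
   -2 * p - q = (-1)^(Suc (Suc n)) * (real (Suc n) + 2)"
proof -
  assume a1: "p = - ((-1)^n) * (real n + 2)" and a2: "q = (-1)^n * (real n + 1)"
  have g: "\<And>c x::real. -2*(-c*(x+2)) - c*(x+1) = c*((1+x)+2)" by (simp add: algebra_simps)
  have e: "((-1::real)^(Suc (Suc n))) = (-1)^n" by simp
  show ?thesis unfolding a1 a2 of_nat_Suc e by (rule g)
qed

lemma P_pi2: "P n pi = (-1)^n * (real n + 1) \<and> P (Suc n) pi = (-1)^(Suc n) * (real n + 2)"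
proof (induction n)
  case 0 then show ?case by simp
next
  case (Suc n)
  have h: "P (Suc (Suc n)) pi = -2 * P (Suc n) pi - P n pi" by simp
  have p: "((-1::real)^(Suc n)) = - ((-1)^n)" by simp
  have i1: "P (Suc n) pi = - ((-1)^n) * (real n + 2)" using Suc.IH unfolding p by blast
  have i2: "P n pi = (-1)^n * (real n + 1)" using Suc.IH by blast
  have "P (Suc (Suc n)) pi = (-1)^(Suc (Suc n)) * (real (Suc n) + 2)"
    unfolding h by (rule pi_step[OF i1 i2])
  moreover have "P (Suc n) pi = (-1)^(Suc n) * (real (Suc n) + 1)"
    using Suc.IH by (simp add: add.commute)
  ultimately show ?case by blast
qed

lemma P_pi: "P n pi = (-1)^n * (real n + 1)" using P_pi2 by blast


lemma cont_left: "isCont f x \<Longrightarrow> (f \<longlongrightarrow> f x) (at_left x)"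
  using continuous_at_imp_continuous_at_within continuous_within by blast

lemma cos_neg: assumes "pi/2 < t" "t < pi" shows "cos t < 0"
proof -
  have "sin (t - pi/2) > 0" using assms by (intro sin_gt_zero) auto
  moreover have "sin (t - pi/2) = - cos t" by (simp add: sin_diff)
  ultimately show ?thesis by simp
qed

lemma F_cont: "continuous_on S (\<lambda>z. F a b z c)"
  unfolding F_def by (intro continuous_intros)

lemma F_isCont_theta: "isCont (\<lambda>t. F a b z (cos t)) x"
  unfolding F_def by (intro continuous_intros)

definition good :: "real \<Rightarrow> real \<Rightarrow> bool" where
  "good a t \<longleftrightarrow> pi/2 < t \<and> t < pi \<and> cos t + 1 < dl a"

lemma good_ev: "eventually (good a) (at_left pi)"
proof -
  have e1: "eventually (\<lambda>t. t \<in> {pi/2<..<pi}) (at_left pi)"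
    by (rule eventually_at_left_real) simp
  have "((\<lambda>t. cos t) \<longlongrightarrow> cos pi) (at_left pi)" by (rule cont_left) (intro continuous_intros)
  then have "((\<lambda>t. cos t) \<longlongrightarrow> -1) (at_left pi)" by simp
  moreover have "-1 < -1 + dl a" using dl_pos[of a] by simp
  ultimately have e2: "eventually (\<lambda>t. cos t < -1 + dl a) (at_left pi)" by (rule order_tendstoD)
  show ?thesis using e1 e2 unfolding good_def by eventually_elim auto
qed

lemma good_c: assumes "good a t" shows "-1 \<le> cos t" "cos t \<le> 0" "cos t + 1 < dl a" "sin t > 0"
  using assms cos_neg[of t] sin_gt_zero[of t] unfolding good_def by auto

lemma wz_eq:
  assumes "a < 1/4" "b > 0" "good a t" "-1 < x" "x < 1" "F a b x (cos t) = 0"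
  shows "wz a b t = x"
  unfolding wz_def
proof (rule the_equality)
  show "-1 < x \<and> x < 1 \<and> fstar a b x t = 0" using assms by (simp add: fstar_F)
next
  fix y assume y: "-1 < y \<and> y < 1 \<and> fstar a b y t = 0"
  have c: "-1 \<le> cos t" "cos t \<le> 0" "cos t + 1 < dl a" using good_c[OF assms(3)] by auto
  show "y = x"
  proof (rule ccontr)
    assume "y \<noteq> x"
    then consider "y < x" | "x < y" by linarith
    then show False
    proof cases
      case 1
      have "F a b y (cos t) < F a b x (cos t)" using F_mono[OF assms(1,2) c, of y x] 1 y assms by auto
      then show False using y assms by (simp add: fstar_F)
    next
      case 2
      have "F a b x (cos t) < F a b y (cos t)" using F_mono[OF assms(1,2) c, of x y] 2 y assms by auto
      then show False using y assms by (simp add: fstar_F)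
    qed
  qed
qed

theorem mainTheorem19:
  fixes a b :: real and m :: nat
  assumes "b > 0" and "1 + a + b > 0" and "9 - 27 * a + b > 0"
    and "2 - 8 * a + 8 * a ^ 2 + a * b \<noteq> 0" and "b + 1 - a \<noteq> 0"
    and "a < 1 / 4"
  shows "\<exists>L. (gm a b m \<longlongrightarrow> L) (at_left pi) \<and> sgn L = (-1) ^ m"
proof -
  have a4: "a < 1/4" and b0: "b > 0" using assms by auto
  have mono1: "\<And>z1 z2. -1 \<le> z1 \<Longrightarrow> z1 < z2 \<Longrightarrow> z2 \<le> 1 \<Longrightarrow> F a b z1 (-1) < F a b z2 (-1)"
    using F_mono[OF a4 b0, of "-1"] dl_pos[of a] by auto
  have F0: "F a b 0 (-1) < 0" unfolding F_def using a4 by simp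
  have F1: "F a b 1 (-1) > 0" unfolding F_def using assms(2) by simp
  obtain w0 where w0: "0 \<le> w0" "w0 \<le> 1" "F a b w0 (-1) = 0"
    using IVT'[of "\<lambda>z. F a b z (-1)" 0 0 1] F0 F1 F_cont by force
  have w0p: "0 < w0" using w0 F0 by (cases "w0 = 0") auto
  have w01: "w0 < 1" using w0 F1 by (cases "w0 = 1") auto
  have lim_w: "(wz a b \<longlongrightarrow> w0) (at_left pi)"
  proof (rule tendstoI)
    fix \<epsilon> :: real assume "\<epsilon> > 0"
    define e where "e = min (\<epsilon>/2) (min (w0/2) ((1-w0)/2))"
    have e: "0 < e" "e < \<epsilon>" "0 < w0 - e" "w0 + e < 1"
    proof -
      have f: "e \<le> \<epsilon>/2" "e \<le> w0/2" "e \<le> (1-w0)/2"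
        unfolding e_def by (rule min.cobounded1, rule order_trans[OF min.cobounded2 min.cobounded1],
             rule order_trans[OF min.cobounded2 min.cobounded2])
      have g: "0 < e" using \<open>\<epsilon> > 0\<close> w0p w01 unfolding e_def by auto
      show "0 < e" by (rule g)
      show "e < \<epsilon>" using f \<open>\<epsilon> > 0\<close> by linarith
      show "0 < w0 - e" using f w0p by linarith
      have "2*e \<le> 1 - w0" using f(3) by simp
      then show "w0 + e < 1" using g w01 by linarith
    qed
    have lo: "F a b (w0 - e) (-1) < 0" using mono1[of "w0 - e" w0] e w0 w01 by auto
    have hi: "F a b (w0 + e) (-1) > 0" using mono1[of w0 "w0 + e"] e w0 w0p by auto
    have t1: "((\<lambda>t. F a b (w0 - e) (cos t)) \<longlongrightarrow> F a b (w0 - e) (-1)) (at_left pi)"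
      using cont_left[OF F_isCont_theta[where a=a and b=b and z="w0 - e" and x=pi]] by simp
    have t2: "((\<lambda>t. F a b (w0 + e) (cos t)) \<longlongrightarrow> F a b (w0 + e) (-1)) (at_left pi)"
      using cont_left[OF F_isCont_theta[where a=a and b=b and z="w0 + e" and x=pi]] by simp
    have ev1: "eventually (\<lambda>t. F a b (w0 - e) (cos t) < 0) (at_left pi)"
      using order_tendstoD(2)[OF t1 lo] .
    have ev2: "eventually (\<lambda>t. F a b (w0 + e) (cos t) > 0) (at_left pi)"
      using order_tendstoD(1)[OF t2 hi] .
    show "eventually (\<lambda>t. dist (wz a b t) w0 < \<epsilon>) (at_left pi)"
      using ev1 ev2 good_ev[of a]
    proof eventually_elim
      case (elim t)
      obtain x where x: "w0 - e \<le> x" "x \<le> w0 + e" "F a b x (cos t) = 0"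
        using IVT'[of "\<lambda>z. F a b z (cos t)" "w0 - e" 0 "w0 + e"] elim e F_cont by force
      have "wz a b t = x" using wz_eq[OF a4 b0 elim(3), of x] x e by auto
      then show ?case using x e by (simp add: dist_real_def abs_le_iff)
    qed
  qed
  have lim_z: "(zeta a b \<longlongrightarrow> 1 / w0) (at_left pi)"
    unfolding zeta_def[abs_def] using lim_w w0p by (intro tendsto_intros) auto
  define L where "L = (1/w0 - cos pi) * P m pi - cos ((real m + 1) * pi) + 1 / (1/w0) ^ (m + 1)"
  have lP: "(P m \<longlongrightarrow> P m pi) (at_left pi)" by (rule cont_left[OF P_cont])
  have lc: "((\<lambda>t. cos t) \<longlongrightarrow> cos pi) (at_left pi)" by (rule cont_left) (intro continuous_intros)
  have lc2: "((\<lambda>t. cos ((real m + 1) * t)) \<longlongrightarrow> cos ((real m + 1) * pi)) (at_left pi)"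
    by (rule cont_left[where f="\<lambda>t. cos ((real m + 1) * t)"]) (intro continuous_intros)
  have lim_g: "((\<lambda>t. (zeta a b t - cos t) * P m t - cos ((real m + 1) * t) + 1 / zeta a b t ^ (m + 1))
      \<longlongrightarrow> L) (at_left pi)"
    unfolding L_def
    using lim_z w0p lP lc lc2
    by (intro tendsto_intros) auto
  have evg: "eventually (\<lambda>t. (zeta a b t - cos t) * P m t - cos ((real m + 1) * t) + 1 / zeta a b t ^ (m + 1)
      = gm a b m t) (at_left pi)"
    using good_ev[of a]
  proof eventually_elim
    case (elim t)
    have "sin t > 0" using good_c[OF elim] by auto
    then show ?case unfolding gm_def P_sin by simp
  qed
  have lim: "(gm a b m \<longlongrightarrow> L) (at_left pi)"
    using tendsto_cong[OF evg] lim_g by simp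
  have cm: "cos ((real m + 1) * pi) = (-1) ^ Suc m"
    using cos_npi[of "Suc m"] by (simp add: add.commute)
  have L2: "L = (-1)^m * ((1/w0 + 1) * (real m + 1) + 1) + w0 ^ (m + 1)"
    unfolding L_def cm P_pi by (simp add: power_one_over algebra_simps)
  have pos: "(1/w0 + 1) * (real m + 1) + 1 > 1" using w0p by (simp add: add_pos_pos)
  have wl: "w0 ^ (m + 1) < 1" "w0 ^ (m+1) > 0" using power_Suc_less_one[OF w0p w01, of m] w0p by simp_all
  have "sgn L = (-1) ^ m"
  proof (cases "even m")
    case True
    then have "L > 0" unfolding L2 using pos wl by simp
    then show ?thesis using True by simp
  next
    case False
    then have "L < 0" unfolding L2 using pos wl by simp
    then show ?thesis using False by simp
  qed
  then show ?thesis using lim by blast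
qed

end
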